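(* For any finite simple graph $G$ of order $n$ with $v_{even}(G)=1$, $\gamma_s'(G)\le n-1$.
   Context: A signed edge domination function (SEDF) of $G$ is $f:E(G)\to\{1,-1\}$ with $\sum_{e'\in E_G(u)\cup E_G(v)}f(e')\ge1$ for every edge $uv$, where $E_G(x)$ is the set of edges incident with $x$; $\gamma_s'(G)$ is the minimum of $\sum_{e\in E(G)}f(e)$ over all SEDFs. $v_{even}(G)$ is the number of vertices of even degree in $G$. *)

theory Defs
  imports Main
begin

definition simple_graph :: "'a set \<Rightarrow> 'a set set \<Rightarrow> bool" where
  "simple_graph V E \<longleftrightarrow> finite V \<and> (\<forall>e\<in>E. e \<subseteq> V \<and> card e = 2)"

definition incident_edges :: "'a set set \<Rightarrow> 'a \<Rightarrow> 'a set set" where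
  "incident_edges E x = {e \<in> E. x \<in> e}"

definition degree :: "'a set set \<Rightarrow> 'a \<Rightarrow> nat" where
  "degree E x = card (incident_edges E x)"

definition v_even :: "'a set \<Rightarrow> 'a set set \<Rightarrow> nat" where
  "v_even V E = card {v \<in> V. even (degree E v)}"

definition is_SEDF :: "'a set set \<Rightarrow> ('a set \<Rightarrow> int) \<Rightarrow> bool" where
  "is_SEDF E f \<longleftrightarrow> (\<forall>e\<in>E. f e \<in> {1, -1}) \<and>
     (\<forall>u v. {u, v} \<in> E \<longrightarrow>
        (\<Sum>e'\<in>incident_edges E u \<union> incident_edges E v. f e') \<ge> 1)"

definition signed_edge_domination_number :: "'a set set \<Rightarrow> int" where
  "signed_edge_domination_number E = Min {(\<Sum>e\<in>E. f e) | f. is_SEDF E f}"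

end

theory Submission
  imports Defs
begin


definition sv :: "'a set set \<Rightarrow> ('a set \<Rightarrow> int) \<Rightarrow> 'a \<Rightarrow> int" where
  "sv E f x = (\<Sum>e\<in>incident_edges E x. f e)"

lemma sv_sum: "finite E \<Longrightarrow> sv E f x = (\<Sum>e\<in>E. if x \<in> e then f e else 0)"
  unfolding sv_def incident_edges_def by (simp add: sum.inter_filter)

lemma degree_sum_nat: "finite E \<Longrightarrow> degree E x = (\<Sum>e\<in>E. if x \<in> e then 1 else 0)"
  unfolding degree_def incident_edges_def card_eq_sum by (rule sum.inter_filter)

lemma degree_sum: "finite E \<Longrightarrow> int (degree E x) = (\<Sum>e\<in>E. if x \<in> e then 1 else 0)"
  by (simp only: degree_sum_nat of_nat_sum) (auto intro!: sum.cong)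

lemma sg_finite: "simple_graph V E \<Longrightarrow> finite E"
proof -
  assume "simple_graph V E"
  then have "E \<subseteq> Pow V" "finite V" unfolding simple_graph_def by auto
  then show "finite E" by (meson finite_Pow_iff finite_subset)
qed

lemma degree_pos_in_V: "simple_graph V E \<Longrightarrow> degree E x > 0 \<Longrightarrow> x \<in> V"
proof -
  assume a: "simple_graph V E" "degree E x > 0"
  then obtain e where "e \<in> E" "x \<in> e" unfolding degree_def incident_edges_def
    by (force simp: card_gt_0_iff)
  then show "x \<in> V" using a(1) unfolding simple_graph_def by blast
qed



lemma step_repl:
  fixes E :: "'a set set" and f f' :: "'a set \<Rightarrow> int"
  assumes fin: "finite E"
    and e1: "{a,v} \<in> E" and e2: "{v,b} \<in> E" and e3: "{b,c} \<in> E" and n4: "{a,c} \<notin> E"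
    and d: "a \<noteq> v" "a \<noteq> b" "a \<noteq> c" "v \<noteq> b" "v \<noteq> c" "b \<noteq> c"
    and E'_def: "E' = insert {a,c} (E - {{a,v},{v,b},{b,c}})"
    and f_def: "f = (\<lambda>e. if e = {a,v} then f' {a,c} else if e = {v,b} then - f' {a,c}
                      else if e = {b,c} then f' {a,c} else f' e)"
  shows "card E' + 2 = card E"
    and "int (degree E x) = int (degree E' x) + (if x = v \<or> x = b then 2 else 0)"
    and "sv E f x = sv E' f' x"
    and "(\<Sum>e\<in>E. f e) = (\<Sum>e\<in>E'. f' e)"
proof -
  define K where "K = {{a,v},{v,b},{b,c}}"
  have KE: "K \<subseteq> E" using e1 e2 e3 K_def by auto
  have dK: "{a,v} \<noteq> {v,b}" "{a,v} \<noteq> {b,c}" "{v,b} \<noteq> {b,c}"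
    using d by (auto simp: doubleton_eq_iff)
  have cK: "card K = 3" using dK unfolding K_def by auto
  have finK: "finite K" unfolding K_def by simp
  have acK: "{a,c} \<notin> E - K" using n4 by auto
  have E'K: "E' = insert {a,c} (E - K)" using E'_def K_def by simp
  have finEK: "finite (E - K)" using fin by simp
  have splitE: "\<And>h. sum h E = sum h (E - K) + sum h K"
    using fin KE by (simp add: sum.subset_diff)
  have splitE': "\<And>h. sum h E' = sum h (E - K) + h {a,c}"
    using E'K acK finEK by (simp add: add.commute)
  have sumK: "\<And>h. sum h K = h {a,v} + h {v,b} + h {b,c}"
    unfolding K_def using dK by (simp add: add.assoc)
  have feq: "\<And>e. e \<in> E - K \<Longrightarrow> f e = f' e" unfolding f_def K_def by auto
  show "card E' + 2 = card E"
  proof -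
    have "card E' = card (E - K) + 1" using E'K acK finEK by simp
    moreover have "card (E - K) = card E - card K" using KE fin finK by (simp add: card_Diff_subset)
    moreover have "card K \<le> card E" using KE fin by (simp add: card_mono)
    ultimately show ?thesis using cK by simp
  qed
  have finE': "finite E'" using E'K finEK by simp
  show "int (degree E x) = int (degree E' x) + (if x = v \<or> x = b then 2 else 0)"
    unfolding degree_sum[OF fin] degree_sum[OF finE'] splitE splitE' sumK
    using d by auto
  show "sv E f x = sv E' f' x"
  proof -
    have "sv E f x = (\<Sum>e\<in>E - K. if x \<in> e then f e else 0) + (\<Sum>e\<in>K. if x \<in> e then f e else 0)"
      unfolding sv_sum[OF fin] splitE ..
    also have "(\<Sum>e\<in>E - K. if x \<in> e then f e else 0) = (\<Sum>e\<in>E - K. if x \<in> e then f' e else 0)"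
      using feq by (intro sum.cong) auto
    also have "(\<Sum>e\<in>K. if x \<in> e then f e else 0) = (if x \<in> {a,c} then f' {a,c} else 0)"
      unfolding sumK f_def using d dK by auto
    also have "(\<Sum>e\<in>E - K. if x \<in> e then f' e else 0) + (if x \<in> {a,c} then f' {a,c} else 0) = sv E' f' x"
      unfolding sv_sum[OF finE'] splitE' ..
    finally show ?thesis .
  qed
  show "(\<Sum>e\<in>E. f e) = (\<Sum>e\<in>E'. f' e)"
  proof -
    have "(\<Sum>e\<in>E. f e) = (\<Sum>e\<in>E - K. f e) + (\<Sum>e\<in>K. f e)" by (rule splitE)
    also have "(\<Sum>e\<in>E - K. f e) = (\<Sum>e\<in>E - K. f' e)" using feq by (intro sum.cong) auto
    also have "(\<Sum>e\<in>K. f e) = f' {a,c}" unfolding sumK f_def using dK by simp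
    finally show ?thesis using splitE'[of f'] by simp
  qed
qed



lemma step_c4:
  fixes E :: "'a set set" and f f' :: "'a set \<Rightarrow> int"
  assumes fin: "finite E"
    and e1: "{a,v} \<in> E" and e2: "{v,b} \<in> E" and e3: "{b,c} \<in> E" and e4: "{c,a} \<in> E"
    and d: "a \<noteq> v" "a \<noteq> b" "a \<noteq> c" "v \<noteq> b" "v \<noteq> c" "b \<noteq> c"
    and E'_def: "E' = E - {{a,v},{v,b},{b,c},{c,a}}"
    and f_def: "f = (\<lambda>e. if e = {a,v} then 1 else if e = {v,b} then -1
                      else if e = {b,c} then 1 else if e = {c,a} then -1 else f' e)"
  shows "card E' + 4 = card E"
    and "int (degree E x) = int (degree E' x) + (if x = a \<or> x = v \<or> x = b \<or> x = c then 2 else 0)"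
    and "sv E f x = sv E' f' x"
    and "(\<Sum>e\<in>E. f e) = (\<Sum>e\<in>E'. f' e)"
proof -
  define K where "K = {{a,v},{v,b},{b,c},{c,a}}"
  have KE: "K \<subseteq> E" using e1 e2 e3 e4 K_def by auto
  have dK: "{a,v} \<noteq> {v,b}" "{a,v} \<noteq> {b,c}" "{v,b} \<noteq> {b,c}"
     "{a,v} \<noteq> {c,a}" "{v,b} \<noteq> {c,a}" "{b,c} \<noteq> {c,a}"
    using d by (auto simp: doubleton_eq_iff)
  have cK: "card K = 4" using dK unfolding K_def by auto
  have finK: "finite K" unfolding K_def by simp
  have E'K: "E' = E - K" using E'_def K_def by simp
  have finEK: "finite (E - K)" using fin by simp
  have splitE: "\<And>h. sum h E = sum h (E - K) + sum h K"
    using fin KE by (simp add: sum.subset_diff)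
  have sumK: "\<And>h. sum h K = h {a,v} + h {v,b} + h {b,c} + h {c,a}"
    unfolding K_def using dK by (simp add: add.assoc)
  have feq: "\<And>e. e \<in> E - K \<Longrightarrow> f e = f' e" unfolding f_def K_def by auto
  show "card E' + 4 = card E"
  proof -
    have "card E' = card E - card K" unfolding E'K using KE fin finK by (simp add: card_Diff_subset)
    moreover have "card K \<le> card E" using KE fin by (simp add: card_mono)
    ultimately show ?thesis using cK by simp
  qed
  have finE': "finite E'" using E'K finEK by simp
  show "int (degree E x) = int (degree E' x) + (if x = a \<or> x = v \<or> x = b \<or> x = c then 2 else 0)"
    unfolding degree_sum[OF fin] degree_sum[OF finE'] splitE sumK
    using d by (auto simp: E'K)
  show "sv E f x = sv E' f' x"
  proof -
    have "sv E f x = (\<Sum>e\<in>E - K. if x \<in> e then f e else 0) + (\<Sum>e\<in>K. if x \<in> e then f e else 0)"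
      unfolding sv_sum[OF fin] splitE ..
    also have "(\<Sum>e\<in>E - K. if x \<in> e then f e else 0) = (\<Sum>e\<in>E - K. if x \<in> e then f' e else 0)"
      using feq by (intro sum.cong) auto
    also have "(\<Sum>e\<in>K. if x \<in> e then f e else 0) = 0"
      unfolding sumK f_def using d dK by auto
    also have "(\<Sum>e\<in>E - K. if x \<in> e then f' e else 0) + 0 = sv E' f' x"
      unfolding sv_sum[OF finE'] by (simp add: E'K)
    finally show ?thesis .
  qed
  show "(\<Sum>e\<in>E. f e) = (\<Sum>e\<in>E'. f' e)"
  proof -
    have "(\<Sum>e\<in>E. f e) = (\<Sum>e\<in>E - K. f e) + (\<Sum>e\<in>K. f e)" by (rule splitE)
    also have "(\<Sum>e\<in>E - K. f e) = (\<Sum>e\<in>E - K. f' e)" using feq by (intro sum.cong) auto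
    also have "(\<Sum>e\<in>K. f e) = 0" unfolding sumK f_def using dK by simp
    finally show ?thesis using E'K by simp
  qed
qed



lemma sum_deg_swap:
  assumes "finite E" "finite S"
  shows "(\<Sum>x\<in>S. int (degree E x)) = (\<Sum>e\<in>E. int (card (S \<inter> e)))"
proof -
  have "(\<Sum>x\<in>S. int (degree E x)) = (\<Sum>x\<in>S. \<Sum>e\<in>E. if x \<in> e then 1 else 0)"
    using degree_sum[OF assms(1)] by simp
  also have "\<dots> = (\<Sum>e\<in>E. \<Sum>x\<in>S. if x \<in> e then 1 else 0)" by (rule sum.swap)
  also have "\<dots> = (\<Sum>e\<in>E. int (card (S \<inter> e)))"
  proof (rule sum.cong)
    fix e assume "e \<in> E"
    have "(\<Sum>x\<in>S. if x \<in> e then (1::int) else 0) = (\<Sum>x\<in>{x\<in>S. x \<in> e}. 1)"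
      by (rule sum.inter_filter[OF assms(2), symmetric])
    also have "\<dots> = int (card (S \<inter> e))" by (simp add: Int_def)
    finally show "(\<Sum>x\<in>S. if x \<in> e then (1::int) else 0) = int (card (S \<inter> e))" .
  qed simp
  finally show ?thesis .
qed

lemma handshake:
  assumes "simple_graph V E"
  shows "(\<Sum>x\<in>V. int (degree E x)) = 2 * int (card E)"
proof -
  have fin: "finite E" "finite V" using assms sg_finite unfolding simple_graph_def by auto
  have "(\<Sum>x\<in>V. int (degree E x)) = (\<Sum>e\<in>E. int (card (V \<inter> e)))" by (rule sum_deg_swap[OF fin])
  also have "\<dots> = (\<Sum>e\<in>E. 2)"
  proof (rule sum.cong)
    fix e assume "e \<in> E"
    then have "V \<inter> e = e" "card e = 2" using assms unfolding simple_graph_def by auto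
    then show "int (card (V \<inter> e)) = 2" by simp
  qed simp
  finally show ?thesis by simp
qed

lemma deg_le:
  assumes "simple_graph V E" "u \<in> V"
  shows "degree E u \<le> card V - 1"
proof -
  have fV: "finite V" using assms unfolding simple_graph_def by auto
  have "incident_edges E u \<subseteq> (\<lambda>y. {u,y}) ` (V - {u})"
  proof
    fix e assume "e \<in> incident_edges E u"
    then have "e \<in> E" "u \<in> e" unfolding incident_edges_def by auto
    then have "e \<subseteq> V" "card e = 2" using assms unfolding simple_graph_def by auto
    then obtain p q where "e = {p,q}" "p \<noteq> q" by (meson card_2_iff)
    then obtain y where "e = {u,y}" "y \<noteq> u" using \<open>u \<in> e\<close> by auto
    then show "e \<in> (\<lambda>y. {u,y}) ` (V - {u})" using \<open>e \<subseteq> V\<close> by auto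
  qed
  then have "degree E u \<le> card ((\<lambda>y. {u,y}) ` (V - {u}))" unfolding degree_def
    using fV by (intro card_mono) auto
  also have "\<dots> \<le> card (V - {u})" by (rule card_image_le) (use fV in simp)
  also have "\<dots> = card V - 1" using assms(2) fV by simp
  finally show ?thesis .
qed

lemma deg_le_card_E:
  assumes "finite E" shows "degree E u \<le> card E"
  unfolding degree_def incident_edges_def using assms by (intro card_mono) auto

lemma terminal:
  assumes sg: "simple_graph V E" and ne: "V \<noteq> {}"
    and uniq: "\<forall>x\<in>V. \<forall>y\<in>V. even (degree E x) \<longrightarrow> even (degree E y) \<longrightarrow> x = y"
    and noI: "\<forall>p q. {p,q} \<in> E \<longrightarrow> degree E p < 3 \<or> degree E q < 3"
  shows "card E + 1 \<le> card V"
proof -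
  have fE: "finite E" using sg by (rule sg_finite)
  have fV: "finite V" using sg unfolding simple_graph_def by auto
  define Z where "Z = {x\<in>V. degree E x < 3}"
  define I where "I = {x\<in>V. degree E x \<ge> 3}"
  have fZ: "finite Z" "finite I" using fV unfolding Z_def I_def by auto
  have VZI: "V = Z \<union> I" "Z \<inter> I = {}" unfolding Z_def I_def by auto
  have cV: "card V = card Z + card I" using VZI fZ by (simp add: card_Un_disjoint)
  have hs: "(\<Sum>x\<in>V. int (degree E x)) = 2 * int (card E)" by (rule handshake[OF sg])
  have hsZI: "(\<Sum>x\<in>V. int (degree E x)) = (\<Sum>x\<in>Z. int (degree E x)) + (\<Sum>x\<in>I. int (degree E x))"
    using VZI fZ by (simp add: sum.union_disjoint)
  have EZ: "int (card E) \<le> (\<Sum>x\<in>Z. int (degree E x))"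
  proof -
    have "(\<Sum>x\<in>Z. int (degree E x)) = (\<Sum>e\<in>E. int (card (Z \<inter> e)))" by (rule sum_deg_swap[OF fE fZ(1)])
    moreover have "(\<Sum>e\<in>E. (1::int)) \<le> (\<Sum>e\<in>E. int (card (Z \<inter> e)))"
    proof (rule sum_mono)
      fix e assume eE: "e \<in> E"
      then have "e \<subseteq> V" "card e = 2" using sg unfolding simple_graph_def by auto
      then obtain p q where pq: "e = {p,q}" "p \<noteq> q" by (meson card_2_iff)
      have "degree E p < 3 \<or> degree E q < 3" using noI eE pq by auto
      then have "Z \<inter> e \<noteq> {}" using pq \<open>e \<subseteq> V\<close> unfolding Z_def by auto
      moreover have "finite (Z \<inter> e)" using fZ by simp
      ultimately have "card (Z \<inter> e) \<ge> 1" by (simp add: Suc_leI card_gt_0_iff)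
      then show "(1::int) \<le> int (card (Z \<inter> e))" by simp
    qed
    ultimately show ?thesis by simp
  qed
  show ?thesis
  proof (cases "\<exists>w\<in>V. degree E w = 2")
    case False
    then have dZ: "\<And>x. x \<in> Z \<Longrightarrow> degree E x \<le> 1" unfolding Z_def by fastforce
    have sZ: "(\<Sum>x\<in>Z. int (degree E x)) \<le> int (card Z)"
    proof -
      have "(\<Sum>x\<in>Z. int (degree E x)) \<le> (\<Sum>x\<in>Z. 1)" using dZ by (intro sum_mono) auto
      then show ?thesis by simp
    qed
    show ?thesis
    proof (cases "I = {}")
      case True
      then have "(\<Sum>x\<in>V. int (degree E x)) \<le> int (card Z)" using hsZI sZ by simp
      then have "2 * card E \<le> card V" using hs cV True by simp
      moreover have "card V \<ge> 1" using ne fV by (simp add: Suc_leI card_gt_0_iff)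
      ultimately show ?thesis by linarith
    next
      case False
      then have "card I \<ge> 1" using fZ by (simp add: Suc_leI card_gt_0_iff)
      then show ?thesis using EZ sZ cV by linarith
    qed
  next
    case True
    then obtain w where w: "w \<in> V" "degree E w = 2" by blast
    have odd_other: "\<And>x. x \<in> V \<Longrightarrow> x \<noteq> w \<Longrightarrow> odd (degree E x)" using uniq w by force
    have wZ: "w \<in> Z" using w unfolding Z_def by simp
    have dZ: "\<And>x. x \<in> Z - {w} \<Longrightarrow> degree E x = 1"
    proof -
      fix x assume "x \<in> Z - {w}"
      then have "x \<in> V" "x \<noteq> w" "degree E x < 3" unfolding Z_def by auto
      then have "odd (degree E x)" using odd_other by auto
      with \<open>degree E x < 3\<close> show "degree E x = 1"
        by presburger
    qed
    have sZ: "(\<Sum>x\<in>Z. int (degree E x)) = int (card Z) + 1"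
    proof -
      have "(\<Sum>x\<in>Z. int (degree E x)) = int (degree E w) + (\<Sum>x\<in>Z - {w}. int (degree E x))"
        using wZ fZ by (simp add: sum.remove)
      also have "(\<Sum>x\<in>Z - {w}. int (degree E x)) = (\<Sum>x\<in>Z - {w}. 1)" using dZ by (intro sum.cong) auto
      also have "\<dots> = int (card Z) - 1"
      proof -
        have "card Z \<ge> 1" using wZ fZ by (metis One_nat_def Suc_leI card_gt_0_iff empty_iff)
        then show ?thesis using wZ fZ by simp
      qed
      finally show ?thesis using w by simp
    qed
    show ?thesis
    proof (cases "card I \<ge> 2")
      case True
      then show ?thesis using EZ sZ cV by linarith
    next
      case False
      then have "card I = 0 \<or> card I = 1" by linarith
      then show ?thesis
      proof
        assume "card I = 0"
        then have "I = {}" using fZ by simp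
        then have "2 * int (card E) = int (card Z) + 1" using hs hsZI sZ by simp
        moreover have "card E \<ge> 2" using deg_le_card_E[OF fE, of w] w by simp
        ultimately show ?thesis using cV \<open>card I = 0\<close> by linarith
      next
        assume "card I = 1"
        then obtain u where "I = {u}" by (meson card_1_singletonE)
        then have uV: "u \<in> V" unfolding I_def by auto
        have "2 * int (card E) = int (card Z) + 1 + int (degree E u)" using hs hsZI sZ \<open>I = {u}\<close> by simp
        moreover have "degree E u \<le> card V - 1" by (rule deg_le[OF sg uV])
        ultimately show ?thesis using cV \<open>card I = 1\<close> by linarith
      qed
    qed
  qed
qed



lemma edge_other:
  assumes "simple_graph V E" "e \<in> E" "x \<in> e"
  shows "\<exists>y. y \<noteq> x \<and> e = {x,y}"
proof -
  have "card e = 2" using assms unfolding simple_graph_def by auto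
  then obtain p q where "e = {p,q}" "p \<noteq> q" by (meson card_2_iff)
  then show ?thesis using assms(3) by auto
qed

lemma deg_ge3:
  assumes "finite E" "{x,p} \<in> E" "{x,q} \<in> E" "{x,r} \<in> E" "p \<noteq> q" "p \<noteq> r" "q \<noteq> r"
  shows "degree E x \<ge> 3"
proof -
  have d: "{x,p} \<noteq> {x,q}" "{x,p} \<noteq> {x,r}" "{x,q} \<noteq> {x,r}" using assms(5-7) by (auto simp: doubleton_eq_iff)
  have "{{x,p},{x,q},{x,r}} \<subseteq> incident_edges E x" using assms(2-4) unfolding incident_edges_def by auto
  moreover have "finite (incident_edges E x)" using assms(1) unfolding incident_edges_def by auto
  ultimately have "card {{x,p},{x,q},{x,r}} \<le> degree E x" unfolding degree_def by (rule card_mono[rotated])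
  moreover have "card {{x,p},{x,q},{x,r}} = 3" using d by simp
  ultimately show ?thesis by simp
qed

lemma deg_ge2:
  assumes "finite E" "{x,p} \<in> E" "{x,q} \<in> E" "p \<noteq> q"
  shows "degree E x \<ge> 2"
proof -
  have d: "{x,p} \<noteq> {x,q}" using assms(4) by (auto simp: doubleton_eq_iff)
  have "{{x,p},{x,q}} \<subseteq> incident_edges E x" using assms(2-3) unfolding incident_edges_def by auto
  moreover have "finite (incident_edges E x)" using assms(1) unfolding incident_edges_def by auto
  ultimately have "card {{x,p},{x,q}} \<le> degree E x" unfolding degree_def by (rule card_mono[rotated])
  moreover have "card {{x,p},{x,q}} = 2" using d by simp
  ultimately show ?thesis by simp
qed

lemma two_nbrs:
  assumes sg: "simple_graph V E" and dv: "degree E v \<ge> 3"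
  shows "\<exists>a1 a2. a1 \<noteq> a2 \<and> a1 \<noteq> b \<and> a2 \<noteq> b \<and> a1 \<noteq> v \<and> a2 \<noteq> v \<and> {a1,v} \<in> E \<and> {a2,v} \<in> E"
proof -
  have fE: "finite E" by (rule sg_finite[OF sg])
  define S where "S = incident_edges E v - {{v,b}}"
  have fS: "finite S" using fE unfolding S_def incident_edges_def by auto
  have "card (incident_edges E v) - card {{v,b}} \<le> card S" unfolding S_def by (rule diff_card_le_card_Diff) simp
  then have cS: "card S \<ge> 2" using dv unfolding degree_def by simp
  then have "S \<noteq> {}" by auto
  then obtain e1 where e1: "e1 \<in> S" by blast
  have "card (S - {e1}) \<ge> 1" using cS e1 fS by simp
  then have "S - {e1} \<noteq> {}" by (metis card.empty not_one_le_zero)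
  then obtain e2 where e2: "e2 \<in> S" "e2 \<noteq> e1" by blast
  have e1E: "e1 \<in> E" "v \<in> e1" "e1 \<noteq> {v,b}" using e1 unfolding S_def incident_edges_def by auto
  have e2E: "e2 \<in> E" "v \<in> e2" "e2 \<noteq> {v,b}" using e2 unfolding S_def incident_edges_def by auto
  obtain a1 where a1: "a1 \<noteq> v" "e1 = {v,a1}" using edge_other[OF sg e1E(1,2)] by blast
  obtain a2 where a2: "a2 \<noteq> v" "e2 = {v,a2}" using edge_other[OF sg e2E(1,2)] by blast
  have "a1 \<noteq> a2" using a1 a2 e2 by auto
  moreover have "a1 \<noteq> b" "a2 \<noteq> b" using a1 a2 e1E e2E by auto
  moreover have "{a1,v} \<in> E" "{a2,v} \<in> E" using a1 a2 e1E e2E by (auto simp: insert_commute)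
  ultimately show ?thesis using a1 a2 by blast
qed

definition cfg :: "'a set set \<Rightarrow> 'a \<Rightarrow> 'a \<Rightarrow> 'a \<Rightarrow> 'a \<Rightarrow> bool" where
  "cfg E a v b c \<longleftrightarrow> a \<noteq> v \<and> a \<noteq> b \<and> a \<noteq> c \<and> v \<noteq> b \<and> v \<noteq> c \<and> b \<noteq> c \<and>
     {a,v} \<in> E \<and> {v,b} \<in> E \<and> {b,c} \<in> E \<and> degree E v \<ge> 3 \<and> degree E b \<ge> 3 \<and>
     ({a,c} \<in> E \<longrightarrow> degree E a \<ge> 3 \<and> degree E c \<ge> 3)"

lemma cfg_exists:
  assumes sg: "simple_graph V E"
    and u2: "\<And>x y. degree E x = 2 \<Longrightarrow> degree E y = 2 \<Longrightarrow> x = y"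
    and vb: "{v,b} \<in> E" and dv: "degree E v \<ge> 3" and db: "degree E b \<ge> 3"
  shows "\<exists>a c. cfg E a v b c"
proof -
  have fE: "finite E" by (rule sg_finite[OF sg])
  have vnb: "v \<noteq> b"
  proof
    assume "v = b"
    then have "card {v,b} = 1" by simp
    moreover have "card {v,b} = 2" using vb sg unfolding simple_graph_def by auto
    ultimately show False by simp
  qed
  obtain a1 a2 where A: "a1 \<noteq> a2" "a1 \<noteq> b" "a2 \<noteq> b" "a1 \<noteq> v" "a2 \<noteq> v" "{a1,v} \<in> E" "{a2,v} \<in> E"
    using two_nbrs[OF sg dv, of b] by blast
  obtain c1 c2 where C: "c1 \<noteq> c2" "c1 \<noteq> v" "c2 \<noteq> v" "c1 \<noteq> b" "c2 \<noteq> b" "{c1,b} \<in> E" "{c2,b} \<in> E"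
    using two_nbrs[OF sg db, of v] by blast
  have good: "cfg E a v b c" if "a \<in> {a1,a2}" "c \<in> {c1,c2}" "a \<noteq> c"
      "{a,c} \<in> E \<Longrightarrow> degree E a \<noteq> 2 \<and> degree E c \<noteq> 2" for a c
  proof -
    have av: "{a,v} \<in> E" "a \<noteq> v" "a \<noteq> b" using that(1) A by auto
    have bc: "{b,c} \<in> E" "c \<noteq> v" "c \<noteq> b" using that(2) C by (auto simp: insert_commute)
    have "degree E a \<ge> 3 \<and> degree E c \<ge> 3" if ac: "{a,c} \<in> E"
    proof -
      have "degree E a \<ge> 2" using deg_ge2[OF fE, of a v c] av ac bc by (auto simp: insert_commute)
      moreover have "degree E c \<ge> 2" using deg_ge2[OF fE, of c b a] av ac bc \<open>a \<noteq> c\<close>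
        by (auto simp: insert_commute)
      ultimately show ?thesis using \<open>{a,c} \<in> E \<Longrightarrow> degree E a \<noteq> 2 \<and> degree E c \<noteq> 2\<close> ac by auto
    qed
    then show ?thesis unfolding cfg_def using av bc vb vnb dv db \<open>a \<noteq> c\<close> by auto
  qed
  obtain a a' where aa: "{a,a'} = {a1,a2}" "a \<noteq> a'" "degree E a \<noteq> 2"
  proof (cases "degree E a1 = 2")
    case True
    then have "degree E a2 \<noteq> 2" using A(1) u2 by blast
    then show ?thesis using that[of a2 a1] A(1) by (simp add: insert_commute)
  next
    case False
    then show ?thesis using that[of a1 a2] A(1) by simp
  qed
  show ?thesis
  proof (cases "\<exists>c\<in>{c1,c2}. c \<noteq> a \<and> degree E c \<noteq> 2")
    case True
    then obtain c where "c \<in> {c1,c2}" "c \<noteq> a" "degree E c \<noteq> 2" by blast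
    then show ?thesis using good[of a c] aa by blast
  next
    case False
    then have F: "\<And>c. c \<in> {c1,c2} \<Longrightarrow> c = a \<or> degree E c = 2" by blast
    obtain w where w: "{a,w} = {c1,c2}" "degree E w = 2" "w \<noteq> a"
    proof (cases "c1 = a")
      case True
      then have "degree E c2 = 2" using F[of c2] C(1) by auto
      then show ?thesis using that[of c2] True C(1) by auto
    next
      case False
      then have d1: "degree E c1 = 2" using F[of c1] by auto
      then have "c2 = a" using F[of c2] C(1) u2 by auto
      then show ?thesis using that[of c1] d1 C(1) by (auto simp: insert_commute)
    qed
    have aC: "a \<in> {c1,c2}" "w \<in> {c1,c2}" using w by auto
    show ?thesis
    proof (cases "{a,w} \<in> E")
      case False
      then show ?thesis using good[of a w] aa aC w by blast
    next
      case True
      have wb: "{w,b} \<in> E" using aC C by auto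
      have ab: "a \<noteq> b" "a \<noteq> v" using aa A by auto
      have "a' \<noteq> w"
      proof
        assume "a' = w"
        then have "{w,v} \<in> E" using aa A by auto
        then have "degree E w \<ge> 3" using deg_ge3[OF fE, of w v b a] wb True ab vnb
          by (auto simp: insert_commute)
        then show False using w by simp
      qed
      then have "degree E a' \<noteq> 2" using u2 w by blast
      then show ?thesis using good[of a' a] aa aC by (metis insert_iff)
    qed
  qed
qed



lemma sv_one: "sv E (\<lambda>_. 1) x = int (degree E x)"
  unfolding sv_def degree_def by simp

lemma main:
  "simple_graph V E \<Longrightarrow> card {x\<in>V. even (degree E x)} \<le> 1 \<Longrightarrow> V \<noteq> {} \<Longrightarrow>
   \<exists>f. (\<forall>e\<in>E. f e \<in> {1,-1}) \<and> (\<forall>x. degree E x \<ge> 1 \<longrightarrow> sv E f x \<ge> 1) \<and>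
       (\<Sum>e\<in>E. f e) \<le> int (card V) - 1"
proof (induction "card E" arbitrary: E rule: less_induct)
  case less
  have sg: "simple_graph V E" and ev: "card {x\<in>V. even (degree E x)} \<le> 1" and ne: "V \<noteq> {}"
    using less.prems by auto
  have fE: "finite E" by (rule sg_finite[OF sg])
  have fV: "finite V" using sg unfolding simple_graph_def by auto
  have uniq: "\<forall>x\<in>V. \<forall>y\<in>V. even (degree E x) \<longrightarrow> even (degree E y) \<longrightarrow> x = y"
  proof (intro ballI impI)
    fix x y assume "x \<in> V" "y \<in> V" "even (degree E x)" "even (degree E y)"
    then have "x \<in> {x\<in>V. even (degree E x)}" "y \<in> {x\<in>V. even (degree E x)}" by auto
    moreover have "finite {x\<in>V. even (degree E x)}" using fV by simp
    ultimately show "x = y" using ev card_le_Suc0_iff_eq[of "{x\<in>V. even (degree E x)}"] by auto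
  qed
  have u2: "\<And>x y. degree E x = 2 \<Longrightarrow> degree E y = 2 \<Longrightarrow> x = y"
  proof -
    fix x y assume "degree E x = 2" "degree E y = 2"
    moreover then have "x \<in> V" "y \<in> V" using degree_pos_in_V[OF sg] by auto
    ultimately show "x = y" using uniq by auto
  qed
  have EV: "\<And>e. e \<in> E \<Longrightarrow> e \<subseteq> V" using sg unfolding simple_graph_def by auto
  show ?case
  proof (cases "\<exists>v b. {v,b} \<in> E \<and> degree E v \<ge> 3 \<and> degree E b \<ge> 3")
    case False
    then have noI: "\<forall>p q. {p,q} \<in> E \<longrightarrow> degree E p < 3 \<or> degree E q < 3"
      using not_less by blast
    have "card E + 1 \<le> card V" by (rule terminal[OF sg ne uniq noI])
    then have "(\<Sum>e\<in>E. (1::int)) \<le> int (card V) - 1" by simp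
    moreover have "\<forall>x. degree E x \<ge> 1 \<longrightarrow> sv E (\<lambda>_. 1) x \<ge> 1" by (simp add: sv_one)
    ultimately show ?thesis by auto
  next
    case True
    then obtain v b where vb: "{v,b} \<in> E" "degree E v \<ge> 3" "degree E b \<ge> 3" by blast
    obtain a c where cf: "cfg E a v b c" using cfg_exists[OF sg u2 vb] by blast
    have d: "a \<noteq> v" "a \<noteq> b" "a \<noteq> c" "v \<noteq> b" "v \<noteq> c" "b \<noteq> c" using cf unfolding cfg_def by auto
    have ed: "{a,v} \<in> E" "{v,b} \<in> E" "{b,c} \<in> E" using cf unfolding cfg_def by auto
    have aV: "a \<in> V" "c \<in> V" using EV ed by auto
    show ?thesis
    proof (cases "{a,c} \<in> E")
      case True
      have d3: "degree E a \<ge> 3" "degree E c \<ge> 3" using cf True unfolding cfg_def by auto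
      define E' where "E' = E - {{a,v},{v,b},{b,c},{c,a}}"
      have ca: "{c,a} \<in> E" using True by (simp add: insert_commute)
      note st = step_c4[OF fE ed ca d E'_def]
      note st0 = step_c4[OF fE ed ca d E'_def refl]
      have sg': "simple_graph V E'" using sg unfolding simple_graph_def E'_def by auto
      have degeq: "degree E x = degree E' x + (if x = a \<or> x = v \<or> x = b \<or> x = c then 2 else 0)" for x
        using st0(2)[of x] by (auto split: if_splits)
      have evs: "{x\<in>V. even (degree E' x)} = {x\<in>V. even (degree E x)}"
        using degeq by auto
      have lt: "card E' < card E" using st0(1) by simp
      obtain f' where f': "\<forall>e\<in>E'. f' e \<in> {1,-1}" "\<forall>x. degree E' x \<ge> 1 \<longrightarrow> sv E' f' x \<ge> 1"
          "(\<Sum>e\<in>E'. f' e) \<le> int (card V) - 1"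
        using less.hyps[OF lt sg'] evs ev ne by auto
      define f where "f = (\<lambda>e. if e = {a,v} then 1 else if e = {v,b} then -1
                      else if e = {b,c} then 1 else if e = {c,a} then -1 else f' e)"
      have P1: "\<forall>e\<in>E. f e \<in> {1,-1}"
        using f'(1) unfolding f_def E'_def by auto
      have P2: "\<forall>x. degree E x \<ge> 1 \<longrightarrow> sv E f x \<ge> 1"
      proof (intro allI impI)
        fix x assume "degree E x \<ge> 1"
        then have "degree E' x \<ge> 1" using degeq[of x] vb d3 by (auto split: if_splits)
        then show "sv E f x \<ge> 1" using f'(2) st(3)[OF f_def] by simp
      qed
      have P3: "(\<Sum>e\<in>E. f e) \<le> int (card V) - 1" using st(4)[OF f_def] f'(3) by simp
      show ?thesis using P1 P2 P3 by blast
    next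
      case False
      define E' where "E' = insert {a,c} (E - {{a,v},{v,b},{b,c}})"
      note st = step_repl[OF fE ed False d E'_def]
      note st0 = step_repl[OF fE ed False d E'_def refl]
      have sg': "simple_graph V E'" using sg aV d unfolding simple_graph_def E'_def by auto
      have degeq: "degree E x = degree E' x + (if x = v \<or> x = b then 2 else 0)" for x
        using st0(2)[of x] by (auto split: if_splits)
      have evs: "{x\<in>V. even (degree E' x)} = {x\<in>V. even (degree E x)}"
        using degeq by auto
      have lt: "card E' < card E" using st0(1) by simp
      obtain f' where f': "\<forall>e\<in>E'. f' e \<in> {1,-1}" "\<forall>x. degree E' x \<ge> 1 \<longrightarrow> sv E' f' x \<ge> 1"
          "(\<Sum>e\<in>E'. f' e) \<le> int (card V) - 1"
        using less.hyps[OF lt sg'] evs ev ne by auto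
      define f where "f = (\<lambda>e. if e = {a,v} then f' {a,c} else if e = {v,b} then - f' {a,c}
                      else if e = {b,c} then f' {a,c} else f' e)"
      have fac: "f' {a,c} \<in> {1,-1}" using f'(1) unfolding E'_def by auto
      have P1: "\<forall>e\<in>E. f e \<in> {1,-1}"
        using f'(1) fac unfolding f_def E'_def by auto
      have P2: "\<forall>x. degree E x \<ge> 1 \<longrightarrow> sv E f x \<ge> 1"
      proof (intro allI impI)
        fix x assume "degree E x \<ge> 1"
        then have "degree E' x \<ge> 1" using degeq[of x] vb by (auto split: if_splits)
        then show "sv E f x \<ge> 1" using f'(2) st(3)[OF f_def] by simp
      qed
      have P3: "(\<Sum>e\<in>E. f e) \<le> int (card V) - 1" using st(4)[OF f_def] f'(3) by simp
      show ?thesis using P1 P2 P3 by blast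
    qed
  qed
qed



lemma inter_inc:
  assumes sg: "simple_graph V E" and uv: "{u,v} \<in> E"
  shows "incident_edges E u \<inter> incident_edges E v = {{u,v}}"
proof
  show "{{u,v}} \<subseteq> incident_edges E u \<inter> incident_edges E v" using uv unfolding incident_edges_def by auto
  show "incident_edges E u \<inter> incident_edges E v \<subseteq> {{u,v}}"
  proof
    fix e assume "e \<in> incident_edges E u \<inter> incident_edges E v"
    then have e: "e \<in> E" "u \<in> e" "v \<in> e" unfolding incident_edges_def by auto
    have "u \<noteq> v"
    proof
      assume "u = v"
      then have "card {u,v} = 1" by simp
      moreover have "card {u,v} = 2" using uv sg unfolding simple_graph_def by auto
      ultimately show False by simp
    qed
    obtain y where "y \<noteq> u" "e = {u,y}" using edge_other[OF sg e(1,2)] by blast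
    then show "e \<in> {{u,v}}" using e \<open>u \<noteq> v\<close> by auto
  qed
qed

theorem mainTheorem8:
  fixes V :: "'a set" and E :: "'a set set"
  assumes "simple_graph V E"
    and "v_even V E = 1"
  shows "signed_edge_domination_number E \<le> int (card V) - 1"
proof -
  have sg: "simple_graph V E" by (rule assms(1))
  have fE: "finite E" by (rule sg_finite[OF sg])
  have ev: "card {x\<in>V. even (degree E x)} \<le> 1" using assms(2) unfolding v_even_def by simp
  have ne: "V \<noteq> {}" using assms(2) unfolding v_even_def by auto
  obtain f where f: "\<forall>e\<in>E. f e \<in> {1,-1}" "\<forall>x. degree E x \<ge> 1 \<longrightarrow> sv E f x \<ge> 1"
      "(\<Sum>e\<in>E. f e) \<le> int (card V) - 1"
    using main[OF sg ev ne] by blast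
  have sedf: "is_SEDF E f"
    unfolding is_SEDF_def
  proof (intro conjI allI impI)
    show "\<forall>e\<in>E. f e \<in> {1,-1}" by (rule f(1))
    fix u v assume uv: "{u,v} \<in> E"
    have fin: "finite (incident_edges E u)" "finite (incident_edges E v)"
      using fE unfolding incident_edges_def by auto
    have sub: "{{u,v}} \<subseteq> incident_edges E u" "{{u,v}} \<subseteq> incident_edges E v"
      using uv unfolding incident_edges_def by auto
    have du: "degree E u \<ge> 1" "degree E v \<ge> 1"
      using card_mono[OF fin(1) sub(1)] card_mono[OF fin(2) sub(2)] unfolding degree_def by auto
    have "(\<Sum>e'\<in>incident_edges E u \<union> incident_edges E v. f e') + (\<Sum>e'\<in>incident_edges E u \<inter> incident_edges E v. f e')
          = sv E f u + sv E f v"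
      unfolding sv_def using fin by (rule sum.union_inter)
    moreover have "(\<Sum>e'\<in>incident_edges E u \<inter> incident_edges E v. f e') = f {u,v}"
      using inter_inc[OF sg uv] by simp
    moreover have "f {u,v} \<le> 1" using f(1) uv by auto
    moreover have "sv E f u \<ge> 1" "sv E f v \<ge> 1" using f(2) du by auto
    ultimately show "(\<Sum>e'\<in>incident_edges E u \<union> incident_edges E v. f e') \<ge> 1" by linarith
  qed
  define S where "S = {(\<Sum>e\<in>E. g e) | g. is_SEDF E g}"
  have "S \<subseteq> {- int (card E) .. int (card E)}"
  proof
    fix s assume "s \<in> S"
    then obtain g where g: "s = (\<Sum>e\<in>E. g e)" "is_SEDF E g" unfolding S_def by blast
    have "\<bar>\<Sum>e\<in>E. g e\<bar> \<le> (\<Sum>e\<in>E. \<bar>g e\<bar>)" by (rule sum_abs)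
    also have "\<dots> = (\<Sum>e\<in>E. 1)" using g(2) unfolding is_SEDF_def by (intro sum.cong) auto
    finally show "s \<in> {- int (card E) .. int (card E)}" using g(1) by auto
  qed
  then have "finite S" by (rule finite_subset) simp
  moreover have "(\<Sum>e\<in>E. f e) \<in> S" using sedf unfolding S_def by blast
  ultimately have "Min S \<le> (\<Sum>e\<in>E. f e)" by (rule Min_le)
  then show ?thesis using f(3) unfolding signed_edge_domination_number_def S_def by simp
qed

end
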